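(* Let $V$ and $W$ be subsets of normed spaces over $\mathbb{R}$ or $\mathbb{C}$ and $T:V\to W$. Assume that for every $w\in T(V)$ the set $\arg\min\{\|v\|:v\in V,\ T(v)=w\}$ is a singleton. Let $W'=\{w\in W:\arg\min\{\|w_0-w\|:w_0\in T(V)\}\text{ is a singleton}\}$. Then there exists a pseudo-inverse $S:W'\to V$ of $T$, and it is unique.
   Context: Let $V,W$ be subsets of normed spaces over $\mathbb{R}$ or $\mathbb{C}$ and $T:V\to W$. For a set $E\subseteq W$ with either $E\subseteq T(V)$ or $T(V)\subseteq E$, an operator $S:E\to V$ is a pseudo-inverse of $T$ (on $E$) if: (BAS) for every $w\in E$, the minimum $m_w=\min_{v\in V}\|T(v)-w\|$ is attained, the norm attains its minimum on $\{v\in V:\|T(v)-w\|=m_w\}$, and $S(w)\in\arg\min\{\|v\|:v\in V,\ \|T(v)-w\|=m_w\}$; and (MP2) $S(T(S(w)))=S(w)$ for every $w\in E$. *)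

theory Defs
  imports "HOL-Analysis.Analysis"
begin

definition argmin_on :: "('a \<Rightarrow> real) \<Rightarrow> 'a set \<Rightarrow> 'a set" where
  "argmin_on f A = {x \<in> A. \<forall>y \<in> A. f x \<le> f y}"

text \<open>When the minimum m_w of norm (T v - w) over V is attained, the set
  of v in V with norm (T v - w) = m_w is exactly argmin_on (\<lambda>v. norm (T v - w)) V.\<close>
definition pseudo_inverse ::
  "'a::real_normed_vector set \<Rightarrow> ('a \<Rightarrow> 'b::real_normed_vector) \<Rightarrow> 'b set \<Rightarrow> ('b \<Rightarrow> 'a) \<Rightarrow> bool" where
  "pseudo_inverse V T E S \<longleftrightarrow>
     (E \<subseteq> T ` V \<or> T ` V \<subseteq> E) \<and>
     (\<forall>w \<in> E.
        argmin_on (\<lambda>v. norm (T v - w)) V \<noteq> {} \<and>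
        argmin_on norm (argmin_on (\<lambda>v. norm (T v - w)) V) \<noteq> {} \<and>
        S w \<in> argmin_on norm (argmin_on (\<lambda>v. norm (T v - w)) V)) \<and>
     (\<forall>w \<in> E. S (T (S w)) = S w)"

end

theory Submission
  imports Defs
begin

lemma argmin_img:
  assumes "argmin_on (\<lambda>w0. norm (w0 - w)) (T ` V) = {p}"
  shows "argmin_on (\<lambda>v. norm (T v - w)) V = {v \<in> V. T v = p}"
proof -
  have "v \<in> argmin_on (\<lambda>v. norm (T v - w)) V \<longleftrightarrow> v \<in> V \<and> T v \<in> argmin_on (\<lambda>w0. norm (w0 - w)) (T ` V)" for v
    unfolding argmin_on_def by auto
  then show ?thesis using assms by auto
qed

lemma self_near:
  assumes "w \<in> T ` V"
  shows "argmin_on (\<lambda>w0. norm (w0 - w)) (T ` V) = {w}"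
  using assms unfolding argmin_on_def by auto

theorem mainTheorem6:
  fixes V :: "'a::real_normed_vector set" and W :: "'b::real_normed_vector set"
    and T :: "'a \<Rightarrow> 'b"
  assumes "T ` V \<subseteq> W"
    and "\<forall>w \<in> T ` V. \<exists>u. argmin_on norm {v \<in> V. T v = w} = {u}"
  shows "let W' = {w \<in> W. \<exists>u. argmin_on (\<lambda>w0. norm (w0 - w)) (T ` V) = {u}} in
           (\<exists>S. pseudo_inverse V T W' S \<and>
                (\<forall>S'. pseudo_inverse V T W' S' \<longrightarrow> (\<forall>w \<in> W'. S' w = S w)))"
proof -
  define W' where "W' = {w \<in> W. \<exists>u. argmin_on (\<lambda>w0. norm (w0 - w)) (T ` V) = {u}}"
  define P where "P w = (THE p. argmin_on (\<lambda>w0. norm (w0 - w)) (T ` V) = {p})" for w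
  define U where "U p = (THE u. argmin_on norm {v \<in> V. T v = p} = {u})" for p
  define S where "S w = U (P w)" for w
  have P: "argmin_on (\<lambda>w0. norm (w0 - w)) (T ` V) = {P w}" if "w \<in> W'" for w
  proof -
    from that obtain p where p: "argmin_on (\<lambda>w0. norm (w0 - w)) (T ` V) = {p}"
      unfolding W'_def by auto
    then have "P w = p" unfolding P_def by auto
    then show ?thesis using p by simp
  qed
  have PT: "P w \<in> T ` V" if "w \<in> W'" for w
    using P[OF that] unfolding argmin_on_def by blast
  have U: "argmin_on norm {v \<in> V. T v = p} = {U p}" if "p \<in> T ` V" for p
  proof -
    from assms(2) that obtain u where u: "argmin_on norm {v \<in> V. T v = p} = {u}" by auto
    then have "U p = u" unfolding U_def by auto
    then show ?thesis using u by simp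
  qed
  have A: "argmin_on (\<lambda>v. norm (T v - w)) V = {v \<in> V. T v = P w}" if "w \<in> W'" for w
    using argmin_img[OF P[OF that]] .
  have sub: "T ` V \<subseteq> W'"
  proof
    fix w assume w: "w \<in> T ` V"
    then have "w \<in> W" using assms(1) by blast
    then show "w \<in> W'" unfolding W'_def using self_near[OF w] by blast
  qed
  have PTV: "P w = w" if "w \<in> T ` V" for w
  proof -
    have "{P w} = {w}" using P[of w] sub that self_near[OF that] by auto
    then show ?thesis by simp
  qed
  have SW: "S w \<in> argmin_on norm (argmin_on (\<lambda>v. norm (T v - w)) V)"
    "argmin_on norm (argmin_on (\<lambda>v. norm (T v - w)) V) = {S w}" if "w \<in> W'" for w
    using A[OF that] U[OF PT[OF that]] unfolding S_def by auto
  have TS: "T (S w) = P w" if "w \<in> W'" for w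
    using SW(1)[OF that] A[OF that] unfolding argmin_on_def by auto
  have STS: "S (T (S w)) = S w" if "w \<in> W'" for w
  proof -
    have "T (S w) \<in> T ` V" using TS[OF that] PT[OF that] by simp
    then have "P (T (S w)) = T (S w)" using PTV by blast
    then show ?thesis using TS[OF that] unfolding S_def by simp
  qed
  have ps: "pseudo_inverse V T W' S"
  proof -
    have "argmin_on (\<lambda>v. norm (T v - w)) V \<noteq> {}" if "w \<in> W'" for w
      using SW(2)[OF that] unfolding argmin_on_def by auto
    then show ?thesis unfolding pseudo_inverse_def using sub SW STS by auto
  qed
  have uq: "\<forall>S'. pseudo_inverse V T W' S' \<longrightarrow> (\<forall>w \<in> W'. S' w = S w)"
    unfolding pseudo_inverse_def using SW(2) by auto
  show ?thesis unfolding Let_def W'_def[symmetric] using ps uq by blast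
qed

end
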